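(* For every integer $m\ge0$, the following identity of rational functions in indeterminates $x,y$ holds: $$\frac{1-x^{m+1}y^{m+1}}{(1-xy)(1-x)^m(1-y)^m}=\sum_{r=0}^{m}\sum_{s=0}^{m-r}\binom{m-r}{s}\binom{m-s}{r}\frac{x^ry^s}{(1-x)^{r+s}(1-y)^{r+s}}.$$ *)

theory Defs
  imports Main
begin

end

theory Submission
  imports Defs
begin

definition S2 :: "'a::comm_ring_1 \<Rightarrow> 'a \<Rightarrow> nat \<Rightarrow> nat \<Rightarrow> (nat \<Rightarrow> nat \<Rightarrow> 'a) \<Rightarrow> 'a" where
  "S2 a b N M f = (\<Sum>r<N. \<Sum>s<M. f r s * a ^ r * b ^ s)"

definition sha :: "(nat \<Rightarrow> nat \<Rightarrow> 'a::comm_ring_1) \<Rightarrow> nat \<Rightarrow> nat \<Rightarrow> 'a" where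
  "sha f r s = (if r = 0 then 0 else f (r - 1) s)"

definition shb :: "(nat \<Rightarrow> nat \<Rightarrow> 'a::comm_ring_1) \<Rightarrow> nat \<Rightarrow> nat \<Rightarrow> 'a" where
  "shb f r s = (if s = 0 then 0 else f r (s - 1))"

lemma S2_sha: "a * S2 a b N M f = S2 a b (Suc N) M (sha f)"
  unfolding S2_def sha_def
  by (simp only: sum.lessThan_Suc_shift) (simp add: sum_distrib_left mult_ac)

lemma S2_shb: "b * S2 a b N M f = S2 a b N (Suc M) (shb f)"
  unfolding S2_def shb_def
  by (simp only: sum.lessThan_Suc_shift) (simp add: sum_distrib_left mult_ac)

lemma S2_add: "S2 a b N M f + S2 a b N M g = S2 a b N M (\<lambda>r s. f r s + g r s)"
  unfolding S2_def by (simp add: sum.distrib[symmetric] algebra_simps)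

lemma S2_cong: "(\<And>r s. f r s = g r s) \<Longrightarrow> S2 a b N M f = S2 a b N M g"
  unfolding S2_def by simp

definition cn :: "nat \<Rightarrow> nat \<Rightarrow> nat \<Rightarrow> nat" where
  "cn m r s = ((m - r) choose s) * ((m - s) choose r)"

definition cc :: "nat \<Rightarrow> nat \<Rightarrow> nat \<Rightarrow> 'a::comm_ring_1" where
  "cc m r s = of_nat (cn m r s)"

lemma cn_van1: "r > m \<Longrightarrow> cn m r s = 0"
  unfolding cn_def by (simp add: binomial_eq_0 less_imp_diff_less)

lemma cn_van2: "s > m \<Longrightarrow> cn m r s = 0"
  unfolding cn_def by (simp add: binomial_eq_0 less_imp_diff_less)

definition R :: "'a::comm_ring_1 \<Rightarrow> 'a \<Rightarrow> nat \<Rightarrow> 'a" where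
  "R a b m = S2 a b (m + 1) (m + 1) (cc m)"

lemma R_ext: "S2 a b (m + 1 + i) (m + 1 + j) (cc m) = R a b m"
proof (induction i)
  case 0
  show ?case
  proof (induction j)
    case 0 then show ?case by (simp add: R_def)
  next
    case (Suc j)
    have "S2 a b (m + 1) (m + 1 + Suc j) (cc m) = S2 a b (m + 1) (m + 1 + j) (cc m)"
      unfolding S2_def by (simp add: cc_def cn_van2)
    then show ?case using Suc by simp
  qed
next
  case (Suc i)
  have "S2 a b (m + 1 + Suc i) (m + 1 + j) (cc m) = S2 a b (m + 1 + i) (m + 1 + j) (cc m)"
    unfolding S2_def by (simp add: cc_def cn_van1)
  then show ?case using Suc by simp
qed

lemma coef_nat:
  "((m+2-r) choose s)*((m+2-s) choose r)
   + (if r=0 then 0 else if s=0 then 0 else ((m-(r-1)) choose (s-1))*((m-(s-1)) choose (r-1)))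
   = ((m+1-r) choose s)*((m+1-s) choose r)
   + (if r=0 then 0 else ((m+1-(r-1)) choose s)*((m+1-s) choose (r-1)))
   + (if s=0 then 0 else ((m+1-r) choose (s-1))*((m+1-(s-1)) choose r))"
proof (cases r)
  case 0
  then show ?thesis
  proof (cases s)
    case (Suc s') then show ?thesis using 0 by simp
  qed simp
next
  case (Suc r')
  show ?thesis
  proof (cases s)
    case 0 then show ?thesis using Suc by simp
  next
    case (Suc s')
    show ?thesis
    proof (cases "r' \<le> m \<and> s' \<le> m")
      case True
      have e1: "Suc m - r' = Suc (m - r')" "Suc m - s' = Suc (m - s')"
        using True by (simp_all add: Suc_diff_le)
      show ?thesis using \<open>r = Suc r'\<close> Suc e1 by (simp add: algebra_simps)
    next
      case False
      then show ?thesis using \<open>r = Suc r'\<close> Suc by auto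
    qed
  qed
qed

lemma coef:
  "cc (m+2) r s + sha (shb (cc m)) r s = cc (m+1) r s + sha (cc (m+1)) r s + shb (cc (m+1)) r s"
proof -
  have "of_nat (((m+2-r) choose s)*((m+2-s) choose r)
   + (if r=0 then 0 else if s=0 then 0 else ((m-(r-1)) choose (s-1))*((m-(s-1)) choose (r-1))))
   = (of_nat (((m+1-r) choose s)*((m+1-s) choose r)
   + (if r=0 then 0 else ((m+1-(r-1)) choose s)*((m+1-s) choose (r-1)))
   + (if s=0 then 0 else ((m+1-r) choose (s-1))*((m+1-(s-1)) choose r))) :: 'a)"
    using coef_nat by metis
  then show ?thesis unfolding cc_def sha_def shb_def cn_def
    by (cases "r = 0"; cases "s = 0"; simp)
qed

lemma R_rec: "R a b (m+2) + a * b * R a b m = R a b (m+1) + a * R a b (m+1) + b * R a b (m+1)"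
proof -
  have h1: "R a b (m+2) = S2 a b (m+3) (m+3) (cc (m+2))" unfolding R_def by (simp add: numeral_3_eq_3)
  have h2: "R a b (m+1) = S2 a b (m+3) (m+3) (cc (m+1))"
    using R_ext[of a b "m+1" 1 1] by (simp add: numeral_3_eq_3)
  have h3: "a * R a b (m+1) = S2 a b (m+3) (m+3) (sha (cc (m+1)))"
    using R_ext[of a b "m+1" 0 1] S2_sha[of a b "m+2" "m+3" "cc (m+1)"] by (simp add: numeral_3_eq_3)
  then have h3': "a * S2 a b (m+3) (m+3) (cc (m+1)) = S2 a b (m+3) (m+3) (sha (cc (m+1)))"
    using h2 by simp
  have h4: "b * R a b (m+1) = S2 a b (m+3) (m+3) (shb (cc (m+1)))"
    using R_ext[of a b "m+1" 1 0] S2_shb[of b a "m+3" "m+2" "cc (m+1)"] by (simp add: numeral_3_eq_3)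
  then have h4': "b * S2 a b (m+3) (m+3) (cc (m+1)) = S2 a b (m+3) (m+3) (shb (cc (m+1)))"
    using h2 by simp
  have h5: "a * b * R a b m = S2 a b (m+3) (m+3) (sha (shb (cc m)))"
    using R_ext[of a b m 1 1] S2_shb[of b a "m+2" "m+2" "cc m"]
      S2_sha[of a b "m+2" "m+3" "shb (cc m)"] by (simp add: mult.assoc numeral_3_eq_3)
  show ?thesis unfolding h5 h1 h2 h3' h4' S2_add
    by (rule S2_cong) (simp add: coef[of m, simplified])
qed

lemma R0: "R a b 0 = 1"
  by (simp add: R_def S2_def cc_def cn_def)

lemma R1: "R a b 1 = 1 + a + b"
  by (simp add: R_def S2_def cc_def cn_def numeral_2_eq_2 lessThan_Suc)

lemma geom: "(1 - z) * (\<Sum>k<n. z ^ k) = 1 - (z::'a::comm_ring_1) ^ n"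
  by (simp add: one_diff_power_eq)

lemma main_poly:
  fixes x y :: "'a::field"
  assumes u: "(1 - x) * (1 - y) \<noteq> 0"
  shows "((1 - x) * (1 - y)) ^ m * R (x / ((1 - x) * (1 - y))) (y / ((1 - x) * (1 - y))) m
     = (\<Sum>k<Suc m. (x * y) ^ k)"
proof -
  define u where "u = (1 - x) * (1 - y)"
  define a where "a = x / u"
  define b where "b = y / u"
  have ua: "u * a = x" and ub: "u * b = y" using u by (simp_all add: u_def a_def b_def)
  define G where "G m = (\<Sum>k<Suc m. (x * y) ^ k)" for m
  have k: "u * (1 + a + b) = 1 + x * y"
  proof -
    have "u * (1 + a + b) = u + u * a + u * b" by (simp add: algebra_simps)
    also have "\<dots> = u + x + y" using ua ub by simp
    also have "\<dots> = 1 + x * y" by (simp add: u_def algebra_simps)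
    finally show ?thesis .
  qed
  have "u ^ m * R a b m = G m \<and> u ^ Suc m * R a b (Suc m) = G (Suc m)"
  proof (induction m)
    case 0
    then show ?case using R1[of a b] k by (simp add: R0 G_def)
  next
    case (Suc m)
    have IH1: "u ^ m * R a b m = G m" and IH2: "u ^ (m+1) * R a b (m+1) = G (m+1)"
      using Suc by simp_all
    have rec: "R a b (m+2) = (1 + a + b) * R a b (m+1) - a * b * R a b m"
      using R_rec[of a b m] by (simp add: algebra_simps)
    have "u ^ (m+2) * R a b (m+2)
        = (u * (1 + a + b)) * (u ^ (m+1) * R a b (m+1)) - (u * a) * (u * b) * (u ^ m * R a b m)"
      unfolding rec by (simp add: algebra_simps power_Suc)
    also have "\<dots> = (1 + x * y) * G (m+1) - x * y * G m"
      by (simp only: k ua ub IH1 IH2)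
    also have "\<dots> = G (m+2)" by (simp add: G_def algebra_simps)
    finally show ?case using Suc by simp
  qed
  then show ?thesis by (simp add: u_def a_def b_def G_def)
qed

theorem theorem2p4:
  fixes x y :: "'a :: field" and m :: nat
  assumes "x \<noteq> 1" and "y \<noteq> 1" and "x * y \<noteq> 1"
  shows "(1 - x ^ (m + 1) * y ^ (m + 1)) / ((1 - x * y) * (1 - x) ^ m * (1 - y) ^ m)
    = (\<Sum>r = 0..m. \<Sum>s = 0..m - r.
         of_nat ((m - r) choose s) * of_nat ((m - s) choose r) *
         (x ^ r * y ^ s / ((1 - x) ^ (r + s) * (1 - y) ^ (r + s))))"
proof -
  define u where "u = (1 - x) * (1 - y)"
  have u0: "u \<noteq> 0" using assms by (simp add: u_def)
  define a where "a = x / u"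
  define b where "b = y / u"
  have xy: "1 - x * y \<noteq> 0" using assms by simp
  have "(1 - x * y) * (\<Sum>k<Suc m. (x * y) ^ k) = 1 - (x*y) ^ Suc m" by (rule geom)
  hence G: "(\<Sum>k<Suc m. (x * y) ^ k) = (1 - x ^ (m + 1) * y ^ (m + 1)) / (1 - x * y)"
    using xy by (simp add: eq_divide_eq mult.commute power_mult_distrib)
  have L: "(1 - x ^ (m + 1) * y ^ (m + 1)) / ((1 - x * y) * (1 - x) ^ m * (1 - y) ^ m)
      = R a b m"
  proof -
    have uR: "u ^ m * R a b m = (1 - x ^ (m + 1) * y ^ (m + 1)) / (1 - x * y)"
      using main_poly[of x y m] u0 G by (simp add: u_def a_def b_def)
    moreover have "(1-x)^m*(1-y)^m = u^m" by (simp add: u_def power_mult_distrib)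
    ultimately have "(1 - x ^ (m + 1) * y ^ (m + 1)) / ((1 - x * y) * (1 - x) ^ m * (1 - y) ^ m)
       = ((1 - x ^ (m + 1) * y ^ (m + 1)) / (1 - x * y)) / u ^ m"
      by (simp only: mult.assoc divide_divide_eq_left)
    also have "\<dots> = (u ^ m * R a b m) / u ^ m" using uR by simp
    also have "\<dots> = R a b m" using u0 by simp
    finally show ?thesis .
  qed
  have hterm: "x ^ r * y ^ s / ((1 - x) ^ (r + s) * (1 - y) ^ (r + s)) = a ^ r * b ^ s" for r s
  proof -
    have "a^r*b^s = x^r*y^s/(u^(r+s))" by (simp add: a_def b_def power_divide power_add)
    moreover have "u^(r+s) = (1-x)^(r+s)*(1-y)^(r+s)" by (simp add: u_def power_mult_distrib)
    ultimately show ?thesis by simp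
  qed
  have "(\<Sum>r = 0..m. \<Sum>s = 0..m - r.
         of_nat ((m - r) choose s) * of_nat ((m - s) choose r) *
         (x ^ r * y ^ s / ((1 - x) ^ (r + s) * (1 - y) ^ (r + s))))
     = (\<Sum>r<Suc m. \<Sum>s<Suc m. cc m r s * a ^ r * b ^ s)"
  proof (rule sum.cong)
    show "{0..m} = {..<Suc m}" by auto
  next
    fix r assume "r \<in> {..<Suc m}"
    show "(\<Sum>s = 0..m - r. of_nat ((m - r) choose s) * of_nat ((m - s) choose r) *
         (x ^ r * y ^ s / ((1 - x) ^ (r + s) * (1 - y) ^ (r + s))))
       = (\<Sum>s<Suc m. cc m r s * a ^ r * b ^ s)"
    proof (rule sum.mono_neutral_cong_left)
      show "finite {..<Suc m}" by simp
      show "{0..m - r} \<subseteq> {..<Suc m}" by auto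
      show "\<forall>i\<in>{..<Suc m} - {0..m - r}. cc m r i * a ^ r * b ^ i = (0::'a)"
        by (auto simp: cc_def cn_def binomial_eq_0)
      fix s
      show "of_nat ((m - r) choose s) * of_nat ((m - s) choose r) *
         (x ^ r * y ^ s / ((1 - x) ^ (r + s) * (1 - y) ^ (r + s))) = cc m r s * a ^ r * b ^ s"
        by (simp add: hterm cc_def cn_def mult.assoc)
    qed
  qed
  also have "\<dots> = R a b m" by (simp add: R_def S2_def)
  finally show ?thesis using L by simp
qed

end
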